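(* Let $f$ be a meromorphic function on $\mathbb C^*$, holomorphic near $1$, which is odd, $f(x^{-1})=-f(x)$, and has a simple zero at $x=1$: $f(1)=0$, $f^{(1)}(1)\neq0$. Let $n\ge2$ and let the variables satisfy $t_1\cdots t_n=1$. Then $\Phi(t_1,\ldots,t_n)\to0$ as $t_1\to1$.
   Context: $f^{(k)}(x):=(x\frac{d}{dx})^kf(x)$. $\Gamma_n$ is the set of compositions of $\{1,\ldots,n\}$: ordered tuples $\gamma=(\gamma_1,\ldots,\gamma_\ell)$ of nonempty pairwise disjoint subsets with union $\{1,\ldots,n\}$, $\ell(\gamma)=\ell$; put $\upsilon(\gamma)_i=\gamma_1\cup\cdots\cup\gamma_{i-1}$. Define $$\Phi(t_1,\ldots,t_n)=\sum_{\gamma\in\Gamma_n}(-1)^{\ell(\gamma)}f^{(\#\gamma_1)}(1)\prod_{i=2}^{\ell(\gamma)}\frac{f^{(\#\gamma_i)}\big(\prod_{j\in\upsilon(\gamma)_i}t_j\big)}{f\big(\prod_{j\in\upsilon(\gamma)_i}t_j\big)}.$$ *)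

theory Defs
  imports "HOL-Complex_Analysis.Complex_Analysis"
begin

(* Euler operator: theta f (x) = x * f'(x);  f^{(k)} = (theta ^^ k) f *)
definition theta :: "(complex \<Rightarrow> complex) \<Rightarrow> (complex \<Rightarrow> complex)" where
  "theta f = (\<lambda>x. x * deriv f x)"

definition eul :: "nat \<Rightarrow> (complex \<Rightarrow> complex) \<Rightarrow> (complex \<Rightarrow> complex)" where
  "eul k f = (theta ^^ k) f"

definition compositions :: "nat \<Rightarrow> nat set list set" where
  "compositions n = {\<gamma>. (\<forall>B\<in>set \<gamma>. B \<noteq> {}) \<and>
     (\<forall>i<length \<gamma>. \<forall>j<length \<gamma>. i \<noteq> j \<longrightarrow> \<gamma> ! i \<inter> \<gamma> ! j = {}) \<and>
     \<Union>(set \<gamma>) = {1..n}}"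

(* upsilon(gamma)_i = gamma_1 \<union> ... \<union> gamma_{i-1}  (1-based i); here with 0-based list index i *)
definition upsilon :: "nat set list \<Rightarrow> nat \<Rightarrow> nat set" where
  "upsilon \<gamma> i = \<Union>(set (take i \<gamma>))"

definition Phi :: "(complex \<Rightarrow> complex) \<Rightarrow> nat \<Rightarrow> (nat \<Rightarrow> complex) \<Rightarrow> complex" where
  "Phi f n t = (\<Sum>\<gamma>\<in>compositions n.
      (-1) ^ length \<gamma> * eul (card (\<gamma> ! 0)) f 1 *
      (\<Prod>i\<in>{1..<length \<gamma>}.
         eul (card (\<gamma> ! i)) f (\<Prod>j\<in>upsilon \<gamma> i. t j) / f (\<Prod>j\<in>upsilon \<gamma> i. t j)))"

end

theory Submission
  imports Defs
begin
definition comps :: "'a set \<Rightarrow> 'a set list set" where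
  "comps A = {\<gamma>. (\<forall>B\<in>set \<gamma>. B \<noteq> {}) \<and> distinct \<gamma> \<and> pairwise disjnt (set \<gamma>) \<and> \<Union>(set \<gamma>) = A}"

lemma idx_disj_iff:
  fixes \<gamma> :: "'a set list"
  assumes ne: "\<forall>B\<in>set \<gamma>. B \<noteq> {}"
  shows "(\<forall>i<length \<gamma>. \<forall>j<length \<gamma>. i \<noteq> j \<longrightarrow> \<gamma> ! i \<inter> \<gamma> ! j = {})
        \<longleftrightarrow> distinct \<gamma> \<and> pairwise disjnt (set \<gamma>)"
proof
  assume H: "\<forall>i<length \<gamma>. \<forall>j<length \<gamma>. i \<noteq> j \<longrightarrow> \<gamma> ! i \<inter> \<gamma> ! j = {}"
  have d: "distinct \<gamma>"
    unfolding distinct_conv_nth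
  proof (intro allI impI)
    fix i j assume a: "i < length \<gamma>" "j < length \<gamma>" "i \<noteq> j"
    then have "\<gamma> ! i \<inter> \<gamma> ! j = {}" using H by blast
    moreover have "\<gamma> ! i \<noteq> {}" using ne a(1) nth_mem by blast
    ultimately show "\<gamma> ! i \<noteq> \<gamma> ! j" by auto
  qed
  have "pairwise disjnt (set \<gamma>)"
    unfolding pairwise_def disjnt_def
  proof (intro ballI impI)
    fix B C assume "B \<in> set \<gamma>" "C \<in> set \<gamma>" "B \<noteq> C"
    then obtain i j where "i < length \<gamma>" "j < length \<gamma>" "B = \<gamma> ! i" "C = \<gamma> ! j"
      by (metis in_set_conv_nth)
    then show "B \<inter> C = {}" using H \<open>B \<noteq> C\<close> by blast
  qed
  with d show "distinct \<gamma> \<and> pairwise disjnt (set \<gamma>)" by simp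
next
  assume H: "distinct \<gamma> \<and> pairwise disjnt (set \<gamma>)"
  show "\<forall>i<length \<gamma>. \<forall>j<length \<gamma>. i \<noteq> j \<longrightarrow> \<gamma> ! i \<inter> \<gamma> ! j = {}"
  proof (intro allI impI)
    fix i j assume a: "i < length \<gamma>" "j < length \<gamma>" "i \<noteq> j"
    then have "\<gamma> ! i \<noteq> \<gamma> ! j" using H nth_eq_iff_index_eq by blast
    moreover have "\<gamma> ! i \<in> set \<gamma>" "\<gamma> ! j \<in> set \<gamma>" using a by auto
    ultimately show "\<gamma> ! i \<inter> \<gamma> ! j = {}" using H unfolding pairwise_def disjnt_def by blast
  qed
qed

lemma compositions_eq: "compositions n = comps {1..n}"
  unfolding compositions_def comps_def
proof (rule Collect_cong)
  fix \<gamma> :: "nat set list"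
  show "((\<forall>B\<in>set \<gamma>. B \<noteq> {}) \<and> (\<forall>i<length \<gamma>. \<forall>j<length \<gamma>. i \<noteq> j \<longrightarrow> \<gamma> ! i \<inter> \<gamma> ! j = {}) \<and> \<Union> (set \<gamma>) = {1..n}) =
        ((\<forall>B\<in>set \<gamma>. B \<noteq> {}) \<and> distinct \<gamma> \<and> pairwise disjnt (set \<gamma>) \<and> \<Union> (set \<gamma>) = {1..n})"
    using idx_disj_iff[of \<gamma>] by blast
qed

lemma finite_comps: assumes "finite A" shows "finite (comps A)"
proof -
  have "comps A \<subseteq> {xs. set xs \<subseteq> Pow A \<and> length xs \<le> card (Pow A)}"
  proof
    fix \<gamma> assume "\<gamma> \<in> comps A"
    then have d: "distinct \<gamma>" and s: "set \<gamma> \<subseteq> Pow A" unfolding comps_def by auto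
    have "length \<gamma> = card (set \<gamma>)" using d by (simp add: distinct_card)
    also have "\<dots> \<le> card (Pow A)" using s assms by (intro card_mono) auto
    finally show "\<gamma> \<in> {xs. set xs \<subseteq> Pow A \<and> length xs \<le> card (Pow A)}" using s by simp
  qed
  moreover have "finite {xs. set xs \<subseteq> Pow A \<and> length xs \<le> card (Pow A)}"
    using assms by (intro finite_lists_length_le) simp
  ultimately show ?thesis by (rule finite_subset)
qed

definition joinL :: "'a \<Rightarrow> 'a set list \<Rightarrow> nat \<Rightarrow> 'a set list" where
  "joinL a \<beta> i = \<beta>[i := insert a (\<beta> ! i)]"
definition singL :: "'a \<Rightarrow> 'a set list \<Rightarrow> nat \<Rightarrow> 'a set list" where
  "singL a \<beta> k = take k \<beta> @ {a} # drop k \<beta>"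
definition remL :: "'a \<Rightarrow> 'a set list \<Rightarrow> 'a set list" where
  "remL a \<gamma> = filter (\<lambda>B. B \<noteq> {}) (map (\<lambda>B. B - {a}) \<gamma>)"

lemma comps_notin: "\<beta> \<in> comps A \<Longrightarrow> a \<notin> A \<Longrightarrow> B \<in> set \<beta> \<Longrightarrow> a \<notin> B"
  unfolding comps_def by blast

lemma remL_id: assumes "\<forall>B\<in>set \<beta>. B \<noteq> {} \<and> a \<notin> B" shows "remL a \<beta> = \<beta>"
proof -
  have "map (\<lambda>B. B - {a}) \<beta> = \<beta>" using assms by (induction \<beta>) auto
  then show ?thesis unfolding remL_def using assms by (simp add: filter_id_conv)
qed

lemma join_in: assumes "\<beta> \<in> comps A" "a \<notin> A" "i < length \<beta>"
  shows "joinL a \<beta> i \<in> comps (insert a A)"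
proof -
  have nb: "\<forall>B\<in>set \<beta>. a \<notin> B" using assms comps_notin by metis
  have bi: "\<beta> ! i \<in> set \<beta>" using assms by simp
  have newnot: "insert a (\<beta> ! i) \<notin> set \<beta>" using nb by blast
  have dist: "distinct \<beta>" and pw: "pairwise disjnt (set \<beta>)" and ne: "\<forall>B\<in>set \<beta>. B \<noteq> {}"
    and un: "\<Union>(set \<beta>) = A"
    using assms(1) unfolding comps_def by blast+
  have s: "set (joinL a \<beta> i) = insert (insert a (\<beta> ! i)) (set \<beta> - {\<beta> ! i})"
    unfolding joinL_def using dist assms(3) by (rule set_update_distinct)
  have "distinct (joinL a \<beta> i)" unfolding joinL_def
    using dist newnot by (intro distinct_list_update) blast+
  moreover have "pairwise disjnt (set (joinL a \<beta> i))"
  proof -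
    have "disjnt (insert a (\<beta> ! i)) C" if "C \<in> set \<beta> - {\<beta> ! i}" for C
    proof -
      have "disjnt (\<beta> ! i) C" using pw bi that unfolding pairwise_def by blast
      moreover have "a \<notin> C" using nb that by blast
      ultimately show ?thesis unfolding disjnt_def by blast
    qed
    moreover have "pairwise disjnt (set \<beta> - {\<beta> ! i})" using pw by (rule pairwise_subset) blast
    ultimately show ?thesis unfolding s pairwise_insert using disjnt_sym by blast
  qed
  moreover have "\<Union>(set (joinL a \<beta> i)) = insert a A"
    unfolding s using un bi by blast
  moreover have "\<forall>B\<in>set (joinL a \<beta> i). B \<noteq> {}" unfolding s using ne by blast
  ultimately show ?thesis unfolding comps_def by blast
qed

lemma sing_in: assumes "\<beta> \<in> comps A" "a \<notin> A" "k \<le> length \<beta>"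
  shows "singL a \<beta> k \<in> comps (insert a A)"
proof -
  have nb: "\<forall>B\<in>set \<beta>. a \<notin> B" using assms comps_notin by metis
  have dist: "distinct \<beta>" and pw: "pairwise disjnt (set \<beta>)" and ne: "\<forall>B\<in>set \<beta>. B \<noteq> {}"
    and un: "\<Union>(set \<beta>) = A"
    using assms(1) unfolding comps_def by blast+
  have s: "set (singL a \<beta> k) = insert {a} (set \<beta>)"
  proof -
    have "set (singL a \<beta> k) = insert {a} (set (take k \<beta>) \<union> set (drop k \<beta>))"
      unfolding singL_def by simp
    also have "set (take k \<beta>) \<union> set (drop k \<beta>) = set \<beta>"
      by (metis append_take_drop_id set_append)
    finally show ?thesis .
  qed
  have na: "{a} \<notin> set \<beta>" using nb by blast
  have "distinct (singL a \<beta> k)"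
  proof -
    have "distinct (take k \<beta> @ drop k \<beta>)" using dist by simp
    then have "distinct (take k \<beta>)" "distinct (drop k \<beta>)" "set (take k \<beta>) \<inter> set (drop k \<beta>) = {}"
      by (simp_all only: distinct_append)
    moreover have "{a} \<notin> set (take k \<beta>)" "{a} \<notin> set (drop k \<beta>)"
      using na by (meson in_set_takeD in_set_dropD)+
    ultimately show ?thesis unfolding singL_def by simp
  qed
  moreover have "pairwise disjnt (set (singL a \<beta> k))"
    unfolding s pairwise_insert using pw nb unfolding disjnt_def by blast
  moreover have "\<Union>(set (singL a \<beta> k)) = insert a A"
    unfolding s using un by blast
  moreover have "\<forall>B\<in>set (singL a \<beta> k). B \<noteq> {}" unfolding s using ne by blast
  ultimately show ?thesis unfolding comps_def by blast
qed

lemma comps_parts: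
  assumes "\<gamma> \<in> comps A"
  shows "distinct \<gamma>" "pairwise disjnt (set \<gamma>)" "\<forall>B\<in>set \<gamma>. B \<noteq> {}" "\<Union>(set \<gamma>) = A"
  using assms unfolding comps_def by blast+

lemma remL_append: "remL a (xs @ ys) = remL a xs @ remL a ys"
  unfolding remL_def by simp

lemma length_singL: "k \<le> length \<beta> \<Longrightarrow> length (singL a \<beta> k) = Suc (length \<beta>)"
  unfolding singL_def by simp

lemma rem_join: assumes "\<beta> \<in> comps A" "a \<notin> A" "i < length \<beta>"
  shows "remL a (joinL a \<beta> i) = \<beta>"
proof -
  have nb: "\<forall>B\<in>set \<beta>. a \<notin> B" using assms comps_notin by metis
  have ne: "\<forall>B\<in>set \<beta>. B \<noteq> {}" using comps_parts[OF assms(1)] by blast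
  have m: "map (\<lambda>B. B - {a}) \<beta> = \<beta>" using nb by (induction \<beta>) auto
  have "insert a (\<beta> ! i) - {a} = \<beta> ! i" using nb assms(3) nth_mem by blast
  then have "map (\<lambda>B. B - {a}) (joinL a \<beta> i) = \<beta>"
    unfolding joinL_def map_update m by simp
  then show ?thesis unfolding remL_def using ne by (simp add: filter_id_conv)
qed

lemma rem_sing: assumes "\<beta> \<in> comps A" "a \<notin> A"
  shows "remL a (singL a \<beta> k) = \<beta>"
proof -
  have nb: "\<forall>B\<in>set \<beta>. a \<notin> B" using assms comps_notin by metis
  have ne: "\<forall>B\<in>set \<beta>. B \<noteq> {}" using comps_parts[OF assms(1)] by blast
  have "remL a (take k \<beta>) = take k \<beta>" using nb ne by (intro remL_id) (meson in_set_takeD)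
  moreover have "remL a (drop k \<beta>) = drop k \<beta>" using nb ne by (intro remL_id) (meson in_set_dropD)
  moreover have "remL a [{a}] = []" unfolding remL_def by simp
  ultimately have "remL a (singL a \<beta> k) = take k \<beta> @ drop k \<beta>"
    unfolding singL_def remL_append[symmetric] by (metis append_Cons append_Nil remL_append)
  then show ?thesis by simp
qed

definition GL :: "'a \<Rightarrow> 'a set list \<times> nat \<times> bool \<Rightarrow> 'a set list" where
  "GL a p = (case p of (\<beta>, i, b) \<Rightarrow> if b then joinL a \<beta> i else singL a \<beta> i)"

definition JS :: "'a set list \<Rightarrow> (nat \<times> bool) set" where
  "JS \<beta> = (\<lambda>i. (i, True)) ` {..<length \<beta>} \<union> (\<lambda>k. (k, False)) ` {..length \<beta>}"

lemma nth_sing: "k \<le> length \<beta> \<Longrightarrow> singL a \<beta> k ! k = {a}"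
  unfolding singL_def by (simp add: nth_append)


lemma GL_inj: assumes "a \<notin> A" shows "inj_on (GL a) (SIGMA \<beta>:comps A. JS \<beta>)"
proof (rule inj_onI)
  fix p q assume p: "p \<in> (SIGMA \<beta>:comps A. JS \<beta>)" and q: "q \<in> (SIGMA \<beta>:comps A. JS \<beta>)"
    and eq: "GL a p = GL a q"
  obtain \<beta> i b where pp: "p = (\<beta>, i, b)" by (cases p) auto
  obtain \<beta>' i' b' where qq: "q = (\<beta>', i', b')" by (cases q) auto
  have b: "\<beta> \<in> comps A" "(i, b) \<in> JS \<beta>" using p pp by auto
  have b': "\<beta>' \<in> comps A" "(i', b') \<in> JS \<beta>'" using q qq by auto
  have nb: "\<forall>B\<in>set \<beta>. a \<notin> B" using b assms comps_notin by metis
  have ne: "\<forall>B\<in>set \<beta>. B \<noteq> {}" using comps_parts[OF b(1)] by blast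
  have rem: "remL a (GL a (\<beta>, i, b)) = \<beta>"
    using b assms by (cases b) (auto simp: GL_def JS_def rem_join rem_sing)
  have rem': "remL a (GL a (\<beta>', i', b')) = \<beta>'"
    using b' assms by (cases b') (auto simp: GL_def JS_def rem_join rem_sing)
  have be: "\<beta>' = \<beta>" using rem rem' eq pp qq by metis
  have eq2: "GL a (\<beta>, i, b) = GL a (\<beta>, i', b')" using eq pp qq be by simp
  have ib: "(i', b') \<in> JS \<beta>" using b' be by simp
  have ja: "a \<in> joinL a \<beta> i ! j \<longleftrightarrow> j = i" if "i < length \<beta>" "j < length \<beta>" for i j
  proof (cases "j = i")
    case True then show ?thesis unfolding joinL_def using that by simp
  next
    case False then show ?thesis unfolding joinL_def using that nb nth_mem by simp
  qed
  have jna: "{a} \<notin> set (joinL a \<beta> i)" if "i < length \<beta>" for i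
  proof
    assume "{a} \<in> set (joinL a \<beta> i)"
    then obtain j where j: "j < length \<beta>" "joinL a \<beta> i ! j = {a}"
      unfolding joinL_def by (metis in_set_conv_nth length_list_update)
    then have "j = i" using ja[OF that j(1)] by simp
    then have "insert a (\<beta> ! i) = {a}" using j that unfolding joinL_def by simp
    moreover have "\<beta> ! i \<noteq> {}" "a \<notin> \<beta> ! i" using ne nb that nth_mem by blast+
    ultimately show False by blast
  qed
  have sa: "{a} \<in> set (singL a \<beta> k)" for k unfolding singL_def by simp
  have sd: "distinct (singL a \<beta> k)" if "k \<le> length \<beta>" for k
    using sing_in[OF b(1) assms that] comps_parts by blast
  show "p = q"
  proof (cases b)
    case True
    then have il: "i < length \<beta>" using b(2) unfolding JS_def by auto
    show ?thesis
    proof (cases b')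
      case True
      then have il': "i' < length \<beta>" using ib unfolding JS_def by auto
      have "joinL a \<beta> i = joinL a \<beta> i'" using eq2 \<open>b\<close> True by (simp add: GL_def)
      then have "i' = i" using ja[OF il il] ja[OF il' il] by simp
      then show ?thesis using pp qq be \<open>b\<close> True by simp
    next
      case False
      have "joinL a \<beta> i = singL a \<beta> i'" using eq2 \<open>b\<close> False by (simp add: GL_def)
      then show ?thesis using jna[OF il] sa by metis
    qed
  next
    case False
    then have il: "i \<le> length \<beta>" using b(2) unfolding JS_def by auto
    show ?thesis
    proof (cases b')
      case True
      then have il': "i' < length \<beta>" using ib unfolding JS_def by auto
      have "singL a \<beta> i = joinL a \<beta> i'" using eq2 \<open>\<not> b\<close> True by (simp add: GL_def)
      then show ?thesis using jna[OF il'] sa by metis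
    next
      case F': False
      then have il': "i' \<le> length \<beta>" using ib unfolding JS_def by auto
      have e: "singL a \<beta> i = singL a \<beta> i'" using eq2 \<open>\<not> b\<close> F' by (simp add: GL_def)
      have "singL a \<beta> i' ! i = {a}" "singL a \<beta> i' ! i' = {a}"
        using nth_sing[OF il, of a] nth_sing[OF il', of a] e by simp_all
      moreover have "i < length (singL a \<beta> i')" "i' < length (singL a \<beta> i')"
        using il il' length_singL[OF il'] by simp_all
      ultimately have "i = i'" using sd[OF il'] nth_eq_iff_index_eq by metis
      then show ?thesis using pp qq be \<open>\<not> b\<close> F' by simp
    qed
  qed
qed

lemma GL_image: assumes "a \<notin> A" shows "GL a ` (SIGMA \<beta>:comps A. JS \<beta>) = comps (insert a A)"
proof
  show "GL a ` (SIGMA \<beta>:comps A. JS \<beta>) \<subseteq> comps (insert a A)"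
  proof
    fix \<gamma> assume "\<gamma> \<in> GL a ` (SIGMA \<beta>:comps A. JS \<beta>)"
    then obtain \<beta> i b where b: "\<beta> \<in> comps A" "(i, b) \<in> JS \<beta>" and g: "\<gamma> = GL a (\<beta>, i, b)" by auto
    show "\<gamma> \<in> comps (insert a A)"
    proof (cases b)
      case True
      then have "i < length \<beta>" using b(2) unfolding JS_def by auto
      then show ?thesis using g True join_in[OF b(1) assms] by (simp add: GL_def)
    next
      case False
      then have "i \<le> length \<beta>" using b(2) unfolding JS_def by auto
      then show ?thesis using g False sing_in[OF b(1) assms] by (simp add: GL_def)
    qed
  qed
next
  show "comps (insert a A) \<subseteq> GL a ` (SIGMA \<beta>:comps A. JS \<beta>)"
  proof
    fix \<gamma> assume g: "\<gamma> \<in> comps (insert a A)"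
    note gp = comps_parts[OF g]
    obtain B where B: "B \<in> set \<gamma>" "a \<in> B" using gp(4) by blast
    obtain xs ys where xy: "\<gamma> = xs @ B # ys" using split_list[OF B(1)] by blast
    have dd: "distinct (xs @ B # ys)" using gp(1) xy by simp
    have notB: "C \<noteq> B" if "C \<in> set xs \<union> set ys" for C using dd that by auto
    have disC: "disjnt C B" if "C \<in> set xs \<union> set ys" for C
      using gp(2) notB[OF that] that B(1) xy unfolding pairwise_def by auto
    have anot: "a \<notin> C" if "C \<in> set xs \<union> set ys" for C using disC[OF that] B(2) unfolding disjnt_def by blast
    have neC: "C \<noteq> {}" if "C \<in> set xs \<union> set ys" for C using gp(3) that xy by auto
    have pwxy: "pairwise disjnt (set xs \<union> set ys)" using gp(2) xy by (auto intro: pairwise_subset)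
    have dxy: "distinct (xs @ ys)" using dd by auto
    have unxy: "\<Union>(set xs \<union> set ys) \<union> B = insert a A" using gp(4) xy by auto
    have anU: "a \<notin> \<Union>(set xs \<union> set ys)" using anot by blast
    have unxy2: "\<Union>(set xs \<union> set ys) \<union> (B - {a}) = A"
    proof -
      have "\<Union>(set xs \<union> set ys) \<union> (B - {a}) = (\<Union>(set xs \<union> set ys) \<union> B) - {a}" using anU by blast
      also have "\<dots> = A" using unxy assms by blast
      finally show ?thesis .
    qed
    show "\<gamma> \<in> GL a ` (SIGMA \<beta>:comps A. JS \<beta>)"
    proof (cases "B = {a}")
      case True
      let ?\<beta> = "xs @ ys"
      have "?\<beta> \<in> comps A" unfolding comps_def
      proof (intro CollectI conjI)
        show "\<forall>C\<in>set ?\<beta>. C \<noteq> {}" using neC by auto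
        show "distinct ?\<beta>" by (rule dxy)
        show "pairwise disjnt (set ?\<beta>)" using pwxy by simp
        show "\<Union>(set ?\<beta>) = A" using unxy2 True by simp
      qed
      moreover have "(length xs, False) \<in> JS ?\<beta>" unfolding JS_def by auto
      moreover have "GL a (?\<beta>, length xs, False) = \<gamma>"
        unfolding GL_def singL_def using xy True by simp
      ultimately show ?thesis by force
    next
      case False
      let ?B = "B - {a}"
      let ?\<beta> = "xs @ ?B # ys"
      have Bne: "?B \<noteq> {}" using False B(2) by blast
      have "?\<beta> \<in> comps A" unfolding comps_def
      proof (intro CollectI conjI)
        show "\<forall>C\<in>set ?\<beta>. C \<noteq> {}" using neC Bne by auto
        have "?B \<notin> set xs \<union> set ys"
        proof
          assume h: "?B \<in> set xs \<union> set ys"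
          then have "disjnt ?B B" using disC by blast
          then show False using Bne unfolding disjnt_def by blast
        qed
        then show "distinct ?\<beta>" using dxy by auto
        have "disjnt ?B C" if "C \<in> set xs \<union> set ys" for C
          using disC[OF that] unfolding disjnt_def by blast
        then show "pairwise disjnt (set ?\<beta>)" using pwxy
          by (auto simp: pairwise_insert disjnt_sym)
        show "\<Union>(set ?\<beta>) = A" using unxy2 by auto
      qed
      moreover have "(length xs, True) \<in> JS ?\<beta>" unfolding JS_def by auto
      moreover have "GL a (?\<beta>, length xs, True) = \<gamma>"
      proof -
        have "insert a ?B = B" using B(2) by blast
        then show ?thesis unfolding GL_def joinL_def using xy by simp
      qed
      ultimately show ?thesis by force
    qed
  qed
qed

lemma comps_insert_sum:
  fixes F :: "'a set list \<Rightarrow> 'b :: comm_monoid_add"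
  assumes "a \<notin> A" "finite A"
  shows "(\<Sum>\<gamma>\<in>comps (insert a A). F \<gamma>) =
     (\<Sum>\<beta>\<in>comps A. (\<Sum>i<length \<beta>. F (joinL a \<beta> i)) + (\<Sum>k\<le>length \<beta>. F (singL a \<beta> k)))"
proof -
  have bij: "bij_betw (GL a) (SIGMA \<beta>:comps A. JS \<beta>) (comps (insert a A))"
    unfolding bij_betw_def using GL_inj[OF assms(1)] GL_image[OF assms(1)] by blast
  have "(\<Sum>\<gamma>\<in>comps (insert a A). F \<gamma>) = (\<Sum>p\<in>(SIGMA \<beta>:comps A. JS \<beta>). F (GL a p))"
    using sum.reindex_bij_betw[OF bij, of F] by simp
  also have "\<dots> = (\<Sum>\<beta>\<in>comps A. \<Sum>q\<in>JS \<beta>. F (GL a (\<beta>, q)))"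
    by (subst sum.Sigma) (auto simp: finite_comps assms JS_def)
  also have "\<dots> = (\<Sum>\<beta>\<in>comps A. (\<Sum>i<length \<beta>. F (joinL a \<beta> i)) + (\<Sum>k\<le>length \<beta>. F (singL a \<beta> k)))"
  proof (rule sum.cong[OF refl])
    fix \<beta>
    have "(\<Sum>q\<in>JS \<beta>. F (GL a (\<beta>, q))) =
       (\<Sum>q\<in>(\<lambda>i. (i, True)) ` {..<length \<beta>}. F (GL a (\<beta>, q))) + (\<Sum>q\<in>(\<lambda>k. (k, False)) ` {..length \<beta>}. F (GL a (\<beta>, q)))"
      unfolding JS_def by (rule sum.union_disjoint) auto
    also have "\<dots> = (\<Sum>i<length \<beta>. F (joinL a \<beta> i)) + (\<Sum>k\<le>length \<beta>. F (singL a \<beta> k))"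
      by (subst sum.reindex, simp add: inj_on_def)+ (simp add: GL_def)
    finally show "(\<Sum>q\<in>JS \<beta>. F (GL a (\<beta>, q))) = (\<Sum>i<length \<beta>. F (joinL a \<beta> i)) + (\<Sum>k\<le>length \<beta>. F (singL a \<beta> k))" .
  qed
  finally show ?thesis .
qed

lemma eul_0[simp]: "eul 0 f = f" unfolding eul_def by simp
lemma eul_Suc_apply: "eul (Suc k) f z = z * deriv (eul k f) z"
  unfolding eul_def theta_def by simp

lemma eul_analytic: "f analytic_on S \<Longrightarrow> eul k f analytic_on S"
proof (induction k)
  case 0 then show ?case by simp
next
  case (Suc k)
  have "eul (Suc k) f = (\<lambda>z. z * deriv (eul k f) z)" using eul_Suc_apply by blast
  moreover have "(\<lambda>z. z * deriv (eul k f) z) analytic_on S"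
    using Suc by (intro analytic_on_mult analytic_on_id analytic_deriv) auto
  ultimately show ?case by simp
qed

definition aa :: "(complex \<Rightarrow> complex) \<Rightarrow> nat \<Rightarrow> complex \<Rightarrow> complex" where
  "aa f k p = eul k f p / f p"

lemma aa_isCont: assumes "f analytic_on {c}" "f c \<noteq> 0" shows "isCont (aa f k) c"
  unfolding aa_def
  using assms eul_analytic[OF assms(1)] by (intro isCont_divide analytic_at_imp_isCont) auto

lemma aa_deriv: assumes "f analytic_on {c}" "f c \<noteq> 0"
  shows "(aa f k has_field_derivative
     (deriv (eul k f) c * f c - eul k f c * deriv f c) / (f c * f c)) (at c)"
proof -
  have "(eul k f has_field_derivative deriv (eul k f) c) (at c)"
    using analytic_on_imp_differentiable_at[OF eul_analytic[OF assms(1)] singletonI]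
    by (simp add: DERIV_deriv_iff_field_differentiable)
  moreover have "(f has_field_derivative deriv f c) (at c)"
    using analytic_on_imp_differentiable_at[OF assms(1) singletonI]
    by (simp add: DERIV_deriv_iff_field_differentiable)
  ultimately show ?thesis unfolding aa_def using assms(2)
    by (rule DERIV_divide[THEN DERIV_cong]) (simp add: power2_eq_square)
qed

lemma aa_identity: assumes "f analytic_on {c}" "f c \<noteq> 0"
  shows "aa f (Suc k) c - aa f 1 c * aa f k c
     - c * ((deriv (eul k f) c * f c - eul k f c * deriv f c) / (f c * f c)) = 0"
  unfolding aa_def eul_Suc_apply using assms(2)
  by (simp add: eul_Suc_apply[of 0, simplified] field_simps)

locale setting =
  fixes f :: "complex \<Rightarrow> complex" and n :: nat and s :: "nat \<Rightarrow> complex"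
  assumes hol1: "f analytic_on {1}"
    and odd: "\<And>x. x \<noteq> 0 \<Longrightarrow> f analytic_on {x} \<Longrightarrow> f (1 / x) = - f x"
    and zero: "f 1 = 0"
    and simple: "eul 1 f 1 \<noteq> 0"
begin

lemma nbhd: obtains r where "r > 0" "r \<le> 1/2" "\<And>z. z \<in> ball 1 r \<Longrightarrow> f analytic_on {z}"
    "\<And>z. z \<in> ball 1 r \<Longrightarrow> f analytic_on {1/z}"
    "\<And>z. z \<in> ball 1 r \<Longrightarrow> f (1/z) = - f z"
    "\<And>z::complex. z \<in> ball 1 r \<Longrightarrow> z \<noteq> 0"
proof -
  obtain e where e: "e > 0" "f holomorphic_on ball 1 e" using hol1 unfolding analytic_on_def by blast
  have an: "f analytic_on ball 1 e" using e by (simp add: analytic_on_open)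
  define r where "r = min (1/2) (e/2)"
  have r: "r > 0" "r \<le> 1/2" "r \<le> e/2" using e unfolding r_def by auto
  have nz: "z \<noteq> 0" if "z \<in> ball 1 r" for z :: complex
  proof
    assume "z = 0"
    then have "dist 1 z = 1" by (simp add: dist_norm)
    then show False using that r by simp
  qed
  have zin: "z \<in> ball 1 e" if "z \<in> ball 1 r" for z using that r by auto
  have izin: "1/z \<in> ball 1 e" if "z \<in> ball 1 r" for z :: complex
  proof -
    have d: "norm (1 - z) < r" using that by (simp add: dist_norm)
    have "norm z \<ge> 1 - norm (1 - z)" using norm_triangle_ineq2[of 1 "1 - z"] by simp
    then have nz2: "norm z > 1/2" using d r by linarith
    have "1 - 1/z = (z - 1) / z" using nz[OF that] by (simp add: field_simps)
    then have "norm (1 - 1/z) = norm (1 - z) / norm z" by (simp add: norm_divide norm_minus_commute)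
    also have "\<dots> < r / (1/2)"
    proof -
      have "norm (1 - z) / norm z \<le> norm (1 - z) / (1/2)"
        using nz2 by (intro divide_left_mono) auto
      also have "\<dots> < r / (1/2)" using d by (intro divide_strict_right_mono) auto
      finally show ?thesis .
    qed
    also have "\<dots> \<le> e" using r by simp
    finally show ?thesis by (simp add: dist_norm)
  qed
  have a1: "f analytic_on {z}" if "z \<in> ball 1 r" for z :: complex
    using an zin[OF that] analytic_on_subset by blast
  have a2: "f analytic_on {1/z}" if "z \<in> ball 1 r" for z :: complex
    using an izin[OF that] analytic_on_subset by blast
  have o: "f (1/z) = - f z" if "z \<in> ball 1 r" for z :: complex
    using odd[OF nz[OF that] a1[OF that]] .
  show ?thesis
    by (rule that[OF r(1) r(2) a1 a2 o nz])
qed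

lemma odd_facts: obtains r where "r > 0" "\<And>z. z \<in> ball 1 r \<Longrightarrow> eul 1 f (1/z) = eul 1 f z"
    "\<And>z. z \<in> ball 1 r \<Longrightarrow> f (1/z) = - f z"
proof -
  obtain r where r: "r > 0" "r \<le> 1/2" "\<And>z. z \<in> ball 1 r \<Longrightarrow> f analytic_on {z}"
    "\<And>z. z \<in> ball 1 r \<Longrightarrow> f analytic_on {1/z}"
    "\<And>z. z \<in> ball 1 r \<Longrightarrow> f (1/z) = - f z"
    "\<And>z::complex. z \<in> ball 1 r \<Longrightarrow> z \<noteq> 0" by (rule nbhd) blast
  have "eul 1 f (1/z) = eul 1 f z" if z: "z \<in> ball 1 r" for z :: complex
  proof -
    have zn: "z \<noteq> 0" using r(6)[OF z] .
    have d1: "(f has_field_derivative deriv f (1/z)) (at (1/z))"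
      using analytic_on_imp_differentiable_at[OF r(4)[OF z] singletonI]
      by (simp add: DERIV_deriv_iff_field_differentiable)
    have d2: "((\<lambda>w. 1/w) has_field_derivative - 1 / (z * z)) (at z)"
      using DERIV_inverse[OF zn] by (simp add: inverse_eq_divide power2_eq_square)
    have dc: "((\<lambda>w. f (1/w)) has_field_derivative deriv f (1/z) * (- 1 / (z * z))) (at z)"
      by (rule DERIV_chain2[OF d1 d2])
    have "((\<lambda>w. - f w) has_field_derivative deriv f (1/z) * (- 1 / (z * z))) (at z)"
      using dc by (rule has_field_derivative_transform_within_open[OF _ open_ball z]) (rule r(5))
    moreover have "((\<lambda>w. - f w) has_field_derivative - deriv f z) (at z)"
      using analytic_on_imp_differentiable_at[OF r(3)[OF z] singletonI]
      by (intro DERIV_minus) (simp add: DERIV_deriv_iff_field_differentiable)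
    ultimately have "deriv f (1/z) * (- 1 / (z * z)) = - deriv f z" by (rule DERIV_unique)
    then have "deriv f (1/z) = z * z * deriv f z" using zn by (simp add: field_simps)
    moreover have "eul 1 f w = w * deriv f w" for w using eul_Suc_apply[of 0 f w] by simp
    ultimately show ?thesis using zn by (simp add: field_simps)
  qed
  then show ?thesis by (rule that[OF r(1) _ r(5)])
qed

lemma eul2_1: "eul 2 f 1 = 0"
proof -
  obtain r where r: "r > 0" "\<And>z. z \<in> ball 1 r \<Longrightarrow> eul 1 f (1/z) = eul 1 f z"
    "\<And>z. z \<in> ball 1 r \<Longrightarrow> f (1/z) = - f z" by (rule odd_facts) blast
  have an: "eul 1 f analytic_on {1}" by (rule eul_analytic[OF hol1])
  have d1: "(eul 1 f has_field_derivative deriv (eul 1 f) 1) (at 1)"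
    using analytic_on_imp_differentiable_at[OF an singletonI]
    by (simp add: DERIV_deriv_iff_field_differentiable)
  have d1': "(eul 1 f has_field_derivative deriv (eul 1 f) 1) (at (1/1))" using d1 by simp
  have d2: "((\<lambda>w. 1/w) has_field_derivative - 1) (at (1::complex))"
    using DERIV_inverse[of "1::complex"] by (simp add: inverse_eq_divide)
  have "((\<lambda>w. eul 1 f (1/w)) has_field_derivative deriv (eul 1 f) 1 * (- 1)) (at 1)"
    by (rule DERIV_chain2[OF d1' d2])
  then have "(eul 1 f has_field_derivative deriv (eul 1 f) 1 * (- 1)) (at 1)"
    by (rule has_field_derivative_transform_within_open[OF _ open_ball[of 1 r]]) (simp add: r(1), rule r(2))
  then have "deriv (eul 1 f) 1 * (- 1) = deriv (eul 1 f) 1" using d1 by (rule DERIV_unique)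
  then have "deriv (eul 1 f) 1 = 0" by simp
  moreover have "eul 2 f 1 = 1 * deriv (eul 1 f) 1"
    using eul_Suc_apply[of 1 f 1] by (simp only: numeral_2_eq_2 One_nat_def)
  ultimately show ?thesis by simp
qed

lemma deriv_f1: "(f has_field_derivative eul 1 f 1) (at 1)"
  using analytic_on_imp_differentiable_at[OF hol1 singletonI]
  by (simp add: DERIV_deriv_iff_field_differentiable eul_Suc_apply[of 0, simplified])

lemma deriv_eul1: "(eul k f has_field_derivative eul (Suc k) f 1) (at 1)"
  using analytic_on_imp_differentiable_at[OF eul_analytic[OF hol1] singletonI]
  by (simp add: DERIV_deriv_iff_field_differentiable eul_Suc_apply)

lemma bracket1_lim:
  "((\<lambda>x. eul (Suc b) f 1 - eul 1 f 1 * aa f b x + eul b f 1 * aa f 1 x) \<longlongrightarrow> 0) (at 1)"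
proof -
  define g where "g x = eul b f 1 * eul 1 f x - eul 1 f 1 * eul b f x" for x
  have g1: "g 1 = 0" unfolding g_def by simp
  have gd: "(g has_field_derivative eul b f 1 * eul 2 f 1 - eul 1 f 1 * eul (Suc b) f 1) (at 1)"
    unfolding g_def using deriv_eul1[of 1] deriv_eul1[of b]
    by (intro derivative_eq_intros) (auto simp: numeral_2_eq_2)
  have "((\<lambda>x. g x / f x) \<longlongrightarrow> - eul (Suc b) f 1) (at 1)"
    by (rule lhopital_complex_simple[OF gd deriv_f1 g1 zero simple]) (use eul2_1 simple in simp)
  then have "((\<lambda>x. eul (Suc b) f 1 + g x / f x) \<longlongrightarrow> eul (Suc b) f 1 + - eul (Suc b) f 1) (at 1)"
    by (intro tendsto_add tendsto_const)
  moreover have "eul (Suc b) f 1 + g x / f x = eul (Suc b) f 1 - eul 1 f 1 * aa f b x + eul b f 1 * aa f 1 x" for x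
    unfolding g_def aa_def by (simp add: diff_divide_distrib)
  ultimately show ?thesis by simp
qed

end

definition termL :: "(complex \<Rightarrow> complex) \<Rightarrow> (nat \<Rightarrow> complex) \<Rightarrow> nat set list \<Rightarrow> complex" where
  "termL f t \<gamma> = (-1) ^ length \<gamma> * eul (card (\<gamma> ! 0)) f 1 *
      (\<Prod>i\<in>{1..<length \<gamma>}.
         eul (card (\<gamma> ! i)) f (\<Prod>j\<in>upsilon \<gamma> i. t j) / f (\<Prod>j\<in>upsilon \<gamma> i. t j))"

lemma Phi_termL: "Phi f n t = (\<Sum>\<gamma>\<in>compositions n. termL f t \<gamma>)"
  unfolding Phi_def termL_def by simp

lemma U_upd: "i < length xs \<Longrightarrow> \<Union>(set (xs[i := insert a (xs ! i)])) = insert a (\<Union>(set xs))"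
proof (induction xs arbitrary: i)
  case Nil then show ?case by simp
next
  case (Cons x xs)
  show ?case
  proof (cases i)
    case 0 then show ?thesis by auto
  next
    case (Suc j)
    then have "j < length xs" using Cons.prems by simp
    then show ?thesis using Suc Cons.IH by auto
  qed
qed

lemma ups_join: assumes "i < length \<beta>"
  shows "upsilon (joinL a \<beta> i) l = (if i < l then insert a (upsilon \<beta> l) else upsilon \<beta> l)"
proof (cases "i < l")
  case True
  have "take l (joinL a \<beta> i) = (take l \<beta>)[i := insert a (take l \<beta> ! i)]"
    unfolding joinL_def take_update_swap using True by simp
  moreover have "i < length (take l \<beta>)" using True assms by simp
  ultimately show ?thesis unfolding upsilon_def using True U_upd by metis
next
  case False
  then show ?thesis unfolding upsilon_def joinL_def by (simp add: take_update_cancel)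
qed

lemma ups_sing: assumes "k \<le> length \<beta>"
  shows "upsilon (singL a \<beta> k) l = (if l \<le> k then upsilon \<beta> l else insert a (upsilon \<beta> (l - 1)))"
proof (cases "l \<le> k")
  case True
  have "take l (singL a \<beta> k) = take l \<beta>"
    unfolding singL_def using True assms by (simp add: take_append min_def)
  then show ?thesis unfolding upsilon_def using True by simp
next
  case False
  have lk: "length (take k \<beta>) = k" using assms by simp
  have "take l (singL a \<beta> k) = take k \<beta> @ {a} # take (l - 1 - k) (drop k \<beta>)"
    unfolding singL_def using False lk by (simp add: take_append take_Cons')
  moreover have "take k \<beta> @ take (l - 1 - k) (drop k \<beta>) = take (l - 1) \<beta>"
    using False take_add[of k "l - 1 - k" \<beta>] by simp
  ultimately have "set (take l (singL a \<beta> k)) = insert {a} (set (take (l - 1) \<beta>))"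
    by (metis Un_insert_right set_append set_simps(2))
  then show ?thesis unfolding upsilon_def using False by simp
qed

lemma nth_join: "i < length \<beta> \<Longrightarrow> l < length \<beta> \<Longrightarrow>
    joinL a \<beta> i ! l = (if l = i then insert a (\<beta> ! i) else \<beta> ! l)"
  unfolding joinL_def by simp

lemma nth_sing2: assumes "k \<le> length \<beta>" "l \<le> length \<beta>"
  shows "singL a \<beta> k ! l = (if l < k then \<beta> ! l else if l = k then {a} else \<beta> ! (l - 1))"
proof -
  have lk: "length (take k \<beta>) = k" using assms by simp
  consider "l < k" | "l = k" | "k < l" by linarith
  then show ?thesis
  proof cases
    case 1 then show ?thesis unfolding singL_def using lk by (simp add: nth_append)
  next
    case 2 then show ?thesis unfolding singL_def using lk by (simp add: nth_append)
  next
    case 3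
    then have "singL a \<beta> k ! l = drop k \<beta> ! (l - k - 1)"
      unfolding singL_def using lk by (simp add: nth_append nth_Cons')
    also have "\<dots> = \<beta> ! (l - 1)" using 3 assms by simp
    finally show ?thesis using 3 by simp
  qed
qed

lemma prod_insert_notin: "finite U \<Longrightarrow> a \<notin> U \<Longrightarrow> (\<Prod>j\<in>insert a U. t j) = t a * (\<Prod>j\<in>U. t j)"
  by simp

lemma termL_join:
  fixes t :: "nat \<Rightarrow> complex"
  assumes i: "i < length \<beta>" and fin: "\<forall>B\<in>set \<beta>. finite B \<and> a \<notin> B"
  shows "termL f t (joinL a \<beta> i) = (-1) ^ length \<beta> * eul (card (\<beta> ! 0) + (if i = 0 then 1 else 0)) f 1 *
     (\<Prod>l\<in>{1..<length \<beta>}. (if l < i then aa f (card (\<beta> ! l)) (\<Prod>j\<in>upsilon \<beta> l. t j)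
        else if l = i then aa f (card (\<beta> ! l) + 1) (\<Prod>j\<in>upsilon \<beta> l. t j)
        else aa f (card (\<beta> ! l)) (t a * (\<Prod>j\<in>upsilon \<beta> l. t j))))"
proof -
  have len: "length (joinL a \<beta> i) = length \<beta>" unfolding joinL_def by simp
  have cardi: "card (insert a (\<beta> ! i)) = card (\<beta> ! i) + 1"
    using fin i nth_mem by simp
  have c0: "card (joinL a \<beta> i ! 0) = card (\<beta> ! 0) + (if i = 0 then 1 else 0)"
  proof -
    have "0 < length \<beta>" using i by linarith
    then show ?thesis using nth_join[OF i, of 0 a] cardi by auto
  qed
  have finU: "finite (upsilon \<beta> l)" "a \<notin> upsilon \<beta> l" for l
    unfolding upsilon_def using fin by (auto dest: in_set_takeD)
  have "eul (card (joinL a \<beta> i ! l)) f (\<Prod>j\<in>upsilon (joinL a \<beta> i) l. t j) /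
          f (\<Prod>j\<in>upsilon (joinL a \<beta> i) l. t j) =
        (if l < i then aa f (card (\<beta> ! l)) (\<Prod>j\<in>upsilon \<beta> l. t j)
        else if l = i then aa f (card (\<beta> ! l) + 1) (\<Prod>j\<in>upsilon \<beta> l. t j)
        else aa f (card (\<beta> ! l)) (t a * (\<Prod>j\<in>upsilon \<beta> l. t j)))"
    if l: "l \<in> {1..<length \<beta>}" for l
  proof -
    have ll: "l < length \<beta>" using l by simp
    show ?thesis
      using nth_join[OF i ll, of a] ups_join[OF i, of a l] cardi finU[of l]
      by (auto simp: aa_def)
  qed
  then have eq: "(\<Prod>l\<in>{1..<length (joinL a \<beta> i)}. eul (card (joinL a \<beta> i ! l)) f (\<Prod>j\<in>upsilon (joinL a \<beta> i) l. t j) /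
          f (\<Prod>j\<in>upsilon (joinL a \<beta> i) l. t j)) =
     (\<Prod>l\<in>{1..<length \<beta>}. (if l < i then aa f (card (\<beta> ! l)) (\<Prod>j\<in>upsilon \<beta> l. t j)
        else if l = i then aa f (card (\<beta> ! l) + 1) (\<Prod>j\<in>upsilon \<beta> l. t j)
        else aa f (card (\<beta> ! l)) (t a * (\<Prod>j\<in>upsilon \<beta> l. t j))))"
    unfolding len by (rule prod.cong[OF refl])
  show ?thesis unfolding termL_def unfolding eq unfolding c0 len ..
qed

lemma termL_sing:
  fixes t :: "nat \<Rightarrow> complex"
  assumes k: "k \<le> length \<beta>" and fin: "\<forall>B\<in>set \<beta>. finite B \<and> a \<notin> B"
  shows "termL f t (singL a \<beta> k) = (-1) ^ (length \<beta> + 1) * eul (if k = 0 then 1 else card (\<beta> ! 0)) f 1 *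
     (\<Prod>l\<in>{1..<length \<beta> + 1}. (if l < k then aa f (card (\<beta> ! l)) (\<Prod>j\<in>upsilon \<beta> l. t j)
        else if l = k then aa f 1 (\<Prod>j\<in>upsilon \<beta> l. t j)
        else aa f (card (\<beta> ! (l - 1))) (t a * (\<Prod>j\<in>upsilon \<beta> (l - 1). t j))))"
proof -
  have len: "length (singL a \<beta> k) = length \<beta> + 1" unfolding singL_def using k by simp
  have c0: "card (singL a \<beta> k ! 0) = (if k = 0 then 1 else card (\<beta> ! 0))"
    using nth_sing2[OF k, of 0 a] by auto
  have finU: "finite (upsilon \<beta> l)" "a \<notin> upsilon \<beta> l" for l
    unfolding upsilon_def using fin by (auto dest: in_set_takeD)
  have "eul (card (singL a \<beta> k ! l)) f (\<Prod>j\<in>upsilon (singL a \<beta> k) l. t j) /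
          f (\<Prod>j\<in>upsilon (singL a \<beta> k) l. t j) =
        (if l < k then aa f (card (\<beta> ! l)) (\<Prod>j\<in>upsilon \<beta> l. t j)
        else if l = k then aa f 1 (\<Prod>j\<in>upsilon \<beta> l. t j)
        else aa f (card (\<beta> ! (l - 1))) (t a * (\<Prod>j\<in>upsilon \<beta> (l - 1). t j)))"
    if l: "l \<in> {1..<length \<beta> + 1}" for l
  proof -
    have ll: "l \<le> length \<beta>" using l by simp
    show ?thesis
      using nth_sing2[OF k ll, of a] ups_sing[OF k, of a l] finU[of "l - 1"]
      by (auto simp: aa_def)
  qed
  then have eq: "(\<Prod>l\<in>{1..<length (singL a \<beta> k)}. eul (card (singL a \<beta> k ! l)) f (\<Prod>j\<in>upsilon (singL a \<beta> k) l. t j) /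
          f (\<Prod>j\<in>upsilon (singL a \<beta> k) l. t j)) =
     (\<Prod>l\<in>{1..<length \<beta> + 1}. (if l < k then aa f (card (\<beta> ! l)) (\<Prod>j\<in>upsilon \<beta> l. t j)
        else if l = k then aa f 1 (\<Prod>j\<in>upsilon \<beta> l. t j)
        else aa f (card (\<beta> ! (l - 1))) (t a * (\<Prod>j\<in>upsilon \<beta> (l - 1). t j))))"
    unfolding len by (rule prod.cong[OF refl])
  show ?thesis unfolding termL_def unfolding eq unfolding c0 len ..
qed

lemma prod_split3:
  fixes u w v :: "nat \<Rightarrow> 'a::comm_monoid_mult"
  assumes "1 \<le> k" "k < M"
  shows "(\<Prod>l\<in>{1..<M}. if l < k then u l else if l = k then w l else v l) =
    (\<Prod>l\<in>{1..<k}. u l) * w k * (\<Prod>l\<in>{Suc k..<M}. v l)"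
proof -
  let ?g = "\<lambda>l. if l < k then u l else if l = k then w l else v l"
  have "prod ?g {1..<M} = prod ?g {1..<k} * prod ?g {k..<M}"
    by (rule prod.atLeastLessThan_concat[symmetric]) (use assms in auto)
  also have "prod ?g {k..<M} = ?g k * prod ?g {Suc k..<M}"
    using assms by (simp add: prod.atLeast_Suc_lessThan)
  also have "prod ?g {1..<k} = (\<Prod>l\<in>{1..<k}. u l)" by (rule prod.cong) auto
  also have "prod ?g {Suc k..<M} = (\<Prod>l\<in>{Suc k..<M}. v l)" by (rule prod.cong) auto
  finally show ?thesis by (simp add: mult.assoc)
qed

lemma telescope:
  fixes u v :: "nat \<Rightarrow> 'a::comm_ring_1"
  shows "(\<Prod>l\<in>{1..<m}. v l) - (\<Prod>l\<in>{1..<m}. u l) =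
    (\<Sum>k\<in>{1..<m}. (\<Prod>l\<in>{1..<k}. u l) * (v k - u k) * (\<Prod>l\<in>{Suc k..<m}. v l))"
proof (induction m)
  case 0 then show ?case by simp
next
  case (Suc m)
  show ?case
  proof (cases "m = 0")
    case True then show ?thesis by simp
  next
    case False
    have split: "{1..<Suc m} = insert m {1..<m}" using False by auto
    have R: "(\<Prod>l\<in>{Suc k..<Suc m}. v l) = (\<Prod>l\<in>{Suc k..<m}. v l) * v m" if "k \<in> {1..<m}" for k
    proof -
      have "{Suc k..<Suc m} = insert m {Suc k..<m}" using that by auto
      then show ?thesis by (simp add: mult.commute)
    qed
    have "(\<Sum>k\<in>{1..<Suc m}. (\<Prod>l\<in>{1..<k}. u l) * (v k - u k) * (\<Prod>l\<in>{Suc k..<Suc m}. v l))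
        = (\<Prod>l\<in>{1..<m}. u l) * (v m - u m) +
          (\<Sum>k\<in>{1..<m}. (\<Prod>l\<in>{1..<k}. u l) * (v k - u k) * (\<Prod>l\<in>{Suc k..<m}. v l)) * v m"
    proof -
      have "(\<Sum>k\<in>{1..<m}. (\<Prod>l\<in>{1..<k}. u l) * (v k - u k) * (\<Prod>l\<in>{Suc k..<Suc m}. v l))
         = (\<Sum>k\<in>{1..<m}. (\<Prod>l\<in>{1..<k}. u l) * (v k - u k) * (\<Prod>l\<in>{Suc k..<m}. v l)) * v m"
        unfolding sum_distrib_right by (rule sum.cong[OF refl]) (simp add: R mult.assoc)
      moreover have "{Suc m..<Suc m} = {}" by simp
      ultimately show ?thesis unfolding split by (simp add: add.commute)
    qed
    also have "\<dots> = (\<Prod>l\<in>{1..<m}. u l) * (v m - u m) +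
          ((\<Prod>l\<in>{1..<m}. v l) - (\<Prod>l\<in>{1..<m}. u l)) * v m"
      using Suc.IH by simp
    also have "\<dots> = (\<Prod>l\<in>{1..<Suc m}. v l) - (\<Prod>l\<in>{1..<Suc m}. u l)"
      unfolding split by (simp add: algebra_simps)
    finally show ?thesis by simp
  qed
qed

locale main = setting +
  assumes n2: "n \<ge> 2"
    and s_nz: "\<And>j. 2 \<le> j \<Longrightarrow> j < n \<Longrightarrow> s j \<noteq> 0"
    and generic: "\<And>T. T \<subseteq> {2..n} \<Longrightarrow> T \<noteq> {} \<Longrightarrow> T \<noteq> {2..n} \<Longrightarrow>
        f analytic_on {\<Prod>j\<in>T. (if j = n then 1 / (\<Prod>k\<in>{2..<n}. s k) else s j)} \<and>
        f (\<Prod>j\<in>T. (if j = n then 1 / (\<Prod>k\<in>{2..<n}. s k) else s j)) \<noteq> 0"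
begin

definition SS where "SS = (\<Prod>k\<in>{2..<n}. s k)"
definition tt where "tt x j = (if j = 1 then x else if j = n then 1 / (x * SS) else s j)"

lemma SS_nz: "SS \<noteq> 0"
  unfolding SS_def using s_nz by (simp add: prod_zero_iff)

lemma tt_1: "j \<in> {2..n} \<Longrightarrow> tt 1 j = (if j = n then 1 / (\<Prod>k\<in>{2..<n}. s k) else s j)"
  unfolding tt_def SS_def by simp

lemma prod_top: "(\<Prod>j\<in>{2..n}. tt x j) = 1 / x"
proof -
  have e: "{2..n} = insert n {2..<n}" using n2 by auto
  have "(\<Prod>j\<in>{2..<n}. tt x j) = SS" unfolding SS_def tt_def by (rule prod.cong) auto
  then have "(\<Prod>j\<in>{2..n}. tt x j) = 1 / (x * SS) * SS" unfolding e using n2 by (simp add: tt_def)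
  then show ?thesis using SS_nz by simp
qed

lemma tt_hol: "(\<lambda>x. tt x j) holomorphic_on ball 1 (1/2)"
proof -
  have nz: "x \<noteq> 0" if "x \<in> ball (1::complex) (1/2)" for x
  proof
    assume "x = 0" then have "dist 1 x = 1" by (simp add: dist_norm)
    then show False using that by simp
  qed
  consider "j = 1" | "j \<noteq> 1" "j = n" | "j \<noteq> 1" "j \<noteq> n" by blast
  then show ?thesis
  proof cases
    case 1 then show ?thesis unfolding tt_def by (simp add: holomorphic_on_id)
  next
    case 2
    have "(\<lambda>x. 1 / (x * SS)) holomorphic_on ball 1 (1/2)"
      using nz SS_nz by (intro holomorphic_on_divide holomorphic_on_mult holomorphic_on_id holomorphic_on_const) auto
    then show ?thesis using 2 unfolding tt_def by simp
  next
    case 3 then show ?thesis unfolding tt_def by (simp add: holomorphic_on_const)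
  qed
qed

end

locale beta = main +
  fixes \<beta> :: "nat set list"
  assumes beta: "\<beta> \<in> comps {2..n}"
begin

definition m where "m = length \<beta>"
definition q where "q x l = (\<Prod>j\<in>upsilon \<beta> l. tt x j)"
definition b where "b l = card (\<beta> ! l)"
definition \<rho> where "\<rho> x l = aa f (b l) (q x l)"
definition \<rho>p where "\<rho>p x l = aa f (b l + 1) (q x l)"
definition \<sigma> where "\<sigma> x l = aa f (b l) (x * q x l)"
definition \<epsilon> where "\<epsilon> x l = aa f 1 (q x l)"

lemma fin: "\<forall>B\<in>set \<beta>. finite B \<and> 1 \<notin> B"
proof
  fix B assume "B \<in> set \<beta>"
  then have "B \<subseteq> {2..n}" using comps_parts(4)[OF beta] by blast
  then show "finite B \<and> 1 \<notin> B" using finite_subset[of B "{2..n}"] by auto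
qed

lemma m_pos: "m \<ge> 1"
proof -
  have "\<Union>(set \<beta>) = {2..n}" using comps_parts(4)[OF beta] .
  moreover have "{2..n} \<noteq> {}" using n2 by simp
  ultimately have "\<beta> \<noteq> []" by auto
  then show ?thesis unfolding m_def by (cases \<beta>) auto
qed

lemma U_sub: "upsilon \<beta> l \<subseteq> {2..n}"
  unfolding upsilon_def using comps_parts(4)[OF beta] by (auto dest: in_set_takeD)

lemma U_m: "upsilon \<beta> m = {2..n}"
  unfolding upsilon_def m_def using comps_parts(4)[OF beta] by simp

lemma U_0: "upsilon \<beta> 0 = {}"
  unfolding upsilon_def by simp

lemma U_ne: assumes "1 \<le> l" "l < m" shows "upsilon \<beta> l \<noteq> {}"
proof -
  have lb: "0 < length \<beta>" using assms unfolding m_def by linarith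
  have l0: "0 < length (take l \<beta>)" using assms lb by simp
  have "take l \<beta> ! 0 = \<beta> ! 0" using assms by simp
  then have "\<beta> ! 0 \<in> set (take l \<beta>)" using nth_mem[OF l0] by simp
  moreover have "\<beta> ! 0 \<noteq> {}"
  proof -
    have "0 < length \<beta>" using assms unfolding m_def by linarith
    then have "\<beta> ! 0 \<in> set \<beta>" by (rule nth_mem)
    then show ?thesis using comps_parts(3)[OF beta] by blast
  qed
  ultimately show ?thesis unfolding upsilon_def by blast
qed

lemma U_ne2: assumes "l < m" shows "upsilon \<beta> l \<noteq> {2..n}"
proof
  assume H: "upsilon \<beta> l = {2..n}"
  let ?L = "\<beta> ! (m - 1)"
  have mm: "m - 1 < length \<beta>" using m_pos unfolding m_def by simp
  have Lin: "?L \<in> set \<beta>" using mm by (rule nth_mem)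
  have Lne: "?L \<noteq> {}" using comps_parts(3)[OF beta] Lin by blast
  have Lsub: "?L \<subseteq> {2..n}" using comps_parts(4)[OF beta] Lin by blast
  have dis: "disjnt C ?L" if Cin: "C \<in> set (take l \<beta>)" for C
  proof -
    obtain j where j: "j < length (take l \<beta>)" "C = take l \<beta> ! j" using Cin unfolding in_set_conv_nth by blast
    have jl: "j < l" using j(1) by simp
    have jC: "C = \<beta> ! j" using j(2) jl by (simp add: nth_take)
    have jm: "j \<noteq> m - 1" using assms jl by linarith
    have jlen: "j < length \<beta>" using jl assms unfolding m_def by linarith
    have ne: "\<beta> ! j \<noteq> ?L"
    proof
      assume "\<beta> ! j = ?L"
      then have "j = m - 1" using nth_eq_iff_index_eq[OF comps_parts(1)[OF beta] jlen mm] by blast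
      then show False using jm by blast
    qed
    have "\<beta> ! j \<in> set \<beta>" using jlen by (rule nth_mem)
    then have "disjnt (\<beta> ! j) ?L" using pairwiseD[OF comps_parts(2)[OF beta] _ Lin ne] by blast
    then show ?thesis using jC by simp
  qed
  obtain y where y: "y \<in> ?L" using Lne by blast
  then have "y \<in> upsilon \<beta> l" using H Lsub by (simp add: subset_iff)
  then obtain C where C: "C \<in> set (take l \<beta>)" "y \<in> C" unfolding upsilon_def by (rule UnionE)
  then show False using dis[OF C(1)] y unfolding disjnt_def by blast
qed

lemma gen: assumes "1 \<le> l" "l < m"
  shows "f analytic_on {q 1 l}" "f (q 1 l) \<noteq> 0"
proof -
  have "q 1 l = (\<Prod>j\<in>upsilon \<beta> l. (if j = n then 1 / (\<Prod>k\<in>{2..<n}. s k) else s j))"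
    unfolding q_def using U_sub by (intro prod.cong refl tt_1) blast
  then show "f analytic_on {q 1 l}" "f (q 1 l) \<noteq> 0"
    using generic[OF U_sub U_ne[OF assms] U_ne2[OF assms(2)]] by simp_all
qed

lemma q_m: "q x m = 1 / x" unfolding q_def U_m by (rule prod_top)
lemma q_0: "q x 0 = 1" unfolding q_def U_0 by simp

lemma q_deriv: "((\<lambda>x. q x l) has_field_derivative deriv (\<lambda>x. q x l) 1) (at 1)"
proof -
  have "(\<lambda>x. q x l) holomorphic_on ball 1 (1/2)"
    unfolding q_def by (intro holomorphic_on_prod tt_hol)
  then have "(\<lambda>x. q x l) field_differentiable at 1"
    by (rule holomorphic_on_imp_differentiable_at) auto
  then show ?thesis by (simp add: DERIV_deriv_iff_field_differentiable)
qed

lemma q_cont: "isCont (\<lambda>x. q x l) 1"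
  using q_deriv by (rule DERIV_isCont)

end

context beta
begin

definition Lk where "Lk k x = (\<Prod>l\<in>{1..<k}. \<rho> x l)"
definition Rk where "Rk k x = (\<Prod>l\<in>{Suc k..<m}. \<sigma> x l)"
definition AA where "AA x = (\<Prod>l\<in>{1..<m}. \<rho> x l)"
definition BB where "BB x = (\<Prod>l\<in>{1..<m}. \<sigma> x l)"
abbreviation H where "H k \<equiv> eul k f 1"

lemma tt_one: "tt x 1 = x" unfolding tt_def by simp

lemma termJ: "i < m \<Longrightarrow> termL f (tt x) (joinL 1 \<beta> i) = (-1) ^ m * H (b 0 + (if i = 0 then 1 else 0)) *
     (\<Prod>l\<in>{1..<m}. (if l < i then \<rho> x l else if l = i then \<rho>p x l else \<sigma> x l))"
  using termL_join[of i \<beta> 1 f "tt x", OF _ fin] unfolding m_def tt_one \<rho>_def \<rho>p_def \<sigma>_def q_def b_def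
  by simp

lemma termS: "k \<le> m \<Longrightarrow> termL f (tt x) (singL 1 \<beta> k) = (-1) ^ (m + 1) * H (if k = 0 then 1 else b 0) *
     (\<Prod>l\<in>{1..<m + 1}. (if l < k then \<rho> x l else if l = k then \<epsilon> x l else \<sigma> x (l - 1)))"
  using termL_sing[of k \<beta> 1 f "tt x", OF _ fin] unfolding m_def tt_one \<rho>_def \<epsilon>_def \<sigma>_def q_def b_def
  by simp

lemma termJ0: "termL f (tt x) (joinL 1 \<beta> 0) = (-1) ^ m * H (b 0 + 1) * BB x"
proof -
  have "(\<Prod>l\<in>{1..<m}. (if l < 0 then \<rho> x l else if l = 0 then \<rho>p x l else \<sigma> x l)) = BB x"
    unfolding BB_def by (rule prod.cong) auto
  then show ?thesis using termJ[of 0 x] m_pos by simp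
qed

lemma termJi: "1 \<le> i \<Longrightarrow> i < m \<Longrightarrow> termL f (tt x) (joinL 1 \<beta> i) = (-1) ^ m * H (b 0) * (Lk i x * \<rho>p x i * Rk i x)"
  using termJ[of i x] prod_split3[of i m "\<rho> x" "\<rho>p x" "\<sigma> x"] unfolding Lk_def Rk_def by simp

lemma shiftprod: "(\<Prod>l\<in>{Suc k..<m + 1}. \<sigma> x (l - 1)) = (\<Prod>l\<in>{k..<m}. \<sigma> x l)"
proof -
  have "(\<Prod>l\<in>{k + 1..<m + 1}. \<sigma> x (l - 1)) = (\<Prod>l\<in>{k..<m}. \<sigma> x (l + 1 - 1))"
    by (rule prod.shift_bounds_nat_ivl)
  then show ?thesis by simp
qed

lemma termS0: "termL f (tt x) (singL 1 \<beta> 0) = - ((-1) ^ m * H 1 * aa f (b 0) x * BB x)"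
proof -
  have "(\<Prod>l\<in>{1..<m + 1}. (if l < 0 then \<rho> x l else if l = 0 then \<epsilon> x l else \<sigma> x (l - 1)))
      = (\<Prod>l\<in>{1..<m + 1}. \<sigma> x (l - 1))" by (rule prod.cong) auto
  also have "\<dots> = \<sigma> x 0 * (\<Prod>l\<in>{Suc 1..<m + 1}. \<sigma> x (l - 1))"
    using m_pos by (subst prod.atLeast_Suc_lessThan) auto
  also have "\<dots> = aa f (b 0) x * BB x"
    unfolding shiftprod BB_def by (simp add: \<sigma>_def q_0)
  finally show ?thesis using termS[of 0 x] by simp
qed

lemma termSk: "1 \<le> k \<Longrightarrow> k < m \<Longrightarrow>
   termL f (tt x) (singL 1 \<beta> k) = - ((-1) ^ m * H (b 0) * (Lk k x * \<epsilon> x k * \<sigma> x k * Rk k x))"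
proof -
  assume k: "1 \<le> k" "k < m"
  have "(\<Prod>l\<in>{1..<m + 1}. (if l < k then \<rho> x l else if l = k then \<epsilon> x l else \<sigma> x (l - 1)))
     = Lk k x * \<epsilon> x k * (\<Prod>l\<in>{Suc k..<m + 1}. \<sigma> x (l - 1))"
    using prod_split3[of k "m + 1" "\<rho> x" "\<epsilon> x" "\<lambda>l. \<sigma> x (l - 1)"] k unfolding Lk_def by simp
  also have "(\<Prod>l\<in>{Suc k..<m + 1}. \<sigma> x (l - 1)) = \<sigma> x k * Rk k x"
    unfolding shiftprod Rk_def using k by (simp add: prod.atLeast_Suc_lessThan)
  finally show ?thesis using termS[of k x] k by (simp add: mult.assoc)
qed

lemma termSm: "termL f (tt x) (singL 1 \<beta> m) = - ((-1) ^ m * H (b 0) * (AA x * \<epsilon> x m))"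
proof -
  have "{1..<m + 1} = insert m {1..<m}" using m_pos by auto
  then have "(\<Prod>l\<in>{1..<m + 1}. (if l < m then \<rho> x l else if l = m then \<epsilon> x l else \<sigma> x (l - 1)))
     = \<epsilon> x m * (\<Prod>l\<in>{1..<m}. (if l < m then \<rho> x l else if l = m then \<epsilon> x l else \<sigma> x (l - 1)))"
    by simp
  also have "(\<Prod>l\<in>{1..<m}. (if l < m then \<rho> x l else if l = m then \<epsilon> x l else \<sigma> x (l - 1))) = AA x"
    unfolding AA_def by (rule prod.cong) auto
  finally have "(\<Prod>l\<in>{1..<m + 1}. (if l < m then \<rho> x l else if l = m then \<epsilon> x l else \<sigma> x (l - 1)))
     = \<epsilon> x m * AA x" .
  then show ?thesis using termS[of m x] m_pos by (simp add: mult.commute)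
qed

end

context beta
begin

definition Fb where "Fb x = (\<Sum>i<m. termL f (tt x) (joinL 1 \<beta> i)) + (\<Sum>k\<le>m. termL f (tt x) (singL 1 \<beta> k))"
definition br1 where "br1 x = H (Suc (b 0)) - H 1 * aa f (b 0) x + H (b 0) * aa f 1 x"
definition brk where "brk k x = \<rho>p x k - \<epsilon> x k * \<sigma> x k - aa f 1 x * (\<sigma> x k - \<rho> x k)"

lemma eps_m: assumes "\<And>z. z \<in> ball 1 r \<Longrightarrow> eul 1 f (1/z) = eul 1 f z"
    "\<And>z. z \<in> ball 1 r \<Longrightarrow> f (1/z) = - f z" "x \<in> ball 1 r"
  shows "\<epsilon> x m = - aa f 1 x"
  unfolding \<epsilon>_def q_m aa_def using assms(1)[OF assms(3)] assms(2)[OF assms(3)] by simp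

lemma Fb_eq: assumes em: "\<epsilon> x m = - aa f 1 x"
  shows "Fb x = (-1) ^ m * (BB x * br1 x + H (b 0) * (\<Sum>k\<in>{1..<m}. Lk k x * Rk k x * brk k x))"
proof -
  let ?s = "(-1::complex) ^ m"
  let ?h = "H (b 0)"
  have s1: "{..<m} = insert 0 {1..<m}" using m_pos by auto
  have s2: "{..m} = insert 0 (insert m {1..<m})" using m_pos by auto
  have J: "(\<Sum>i<m. termL f (tt x) (joinL 1 \<beta> i)) =
     ?s * H (b 0 + 1) * BB x + (\<Sum>i\<in>{1..<m}. ?s * ?h * (Lk i x * \<rho>p x i * Rk i x))"
  proof -
    have "(\<Sum>i\<in>{1..<m}. termL f (tt x) (joinL 1 \<beta> i)) = (\<Sum>i\<in>{1..<m}. ?s * ?h * (Lk i x * \<rho>p x i * Rk i x))"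
      by (intro sum.cong refl termJi) auto
    moreover have "(\<Sum>i<m. termL f (tt x) (joinL 1 \<beta> i)) = termL f (tt x) (joinL 1 \<beta> 0) + (\<Sum>i\<in>{1..<m}. termL f (tt x) (joinL 1 \<beta> i))"
      unfolding s1 by (rule sum.insert) auto
    ultimately show ?thesis unfolding termJ0 by simp
  qed
  have S: "(\<Sum>k\<le>m. termL f (tt x) (singL 1 \<beta> k)) =
     - (?s * H 1 * aa f (b 0) x * BB x) + ?s * ?h * AA x * aa f 1 x
      - (\<Sum>k\<in>{1..<m}. ?s * ?h * (Lk k x * \<epsilon> x k * \<sigma> x k * Rk k x))"
  proof -
    have "(\<Sum>k\<in>{1..<m}. termL f (tt x) (singL 1 \<beta> k)) = (\<Sum>k\<in>{1..<m}. - (?s * ?h * (Lk k x * \<epsilon> x k * \<sigma> x k * Rk k x)))"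
      by (intro sum.cong refl termSk) auto
    moreover have "m \<noteq> 0" using m_pos by simp
    moreover have "(\<Sum>k\<le>m. termL f (tt x) (singL 1 \<beta> k)) = termL f (tt x) (singL 1 \<beta> 0) +
         (termL f (tt x) (singL 1 \<beta> m) + (\<Sum>k\<in>{1..<m}. termL f (tt x) (singL 1 \<beta> k)))"
      unfolding s2 using \<open>m \<noteq> 0\<close> by (subst sum.insert, simp, simp) (subst sum.insert, simp_all)
    ultimately show ?thesis unfolding termS0 termSm em
      by (simp add: sum_negf algebra_simps)
  qed
  have tel: "BB x - AA x = (\<Sum>k\<in>{1..<m}. Lk k x * (\<sigma> x k - \<rho> x k) * Rk k x)"
    unfolding BB_def AA_def Lk_def Rk_def by (rule telescope)
  have K: "(\<Sum>k\<in>{1..<m}. Lk k x * Rk k x * brk k x) =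
      (\<Sum>k\<in>{1..<m}. Lk k x * \<rho>p x k * Rk k x) - (\<Sum>k\<in>{1..<m}. Lk k x * \<epsilon> x k * \<sigma> x k * Rk k x)
      - aa f 1 x * (\<Sum>k\<in>{1..<m}. Lk k x * (\<sigma> x k - \<rho> x k) * Rk k x)"
    unfolding brk_def sum_distrib_left sum_subtractf[symmetric]
    by (rule sum.cong[OF refl]) (simp add: algebra_simps)
  show ?thesis
    unfolding Fb_def J S K tel[symmetric] br1_def
    by (simp add: sum_distrib_left[symmetric] algebra_simps)
qed

end

context beta
begin

lemma cont_q: assumes "1 \<le> l" "l < m"
  shows "((\<lambda>x. aa f k (q x l)) \<longlongrightarrow> aa f k (q 1 l)) (at 1)"
    "((\<lambda>x. aa f k (x * q x l)) \<longlongrightarrow> aa f k (q 1 l)) (at 1)"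
proof -
  have c: "isCont (aa f k) (q 1 l)" using aa_isCont gen[OF assms] by blast
  have "isCont (\<lambda>x. aa f k (q x l)) 1" using q_cont c by (rule isCont_o2)
  then show "((\<lambda>x. aa f k (q x l)) \<longlongrightarrow> aa f k (q 1 l)) (at 1)" by (simp add: isCont_def)
  have c2: "isCont (\<lambda>x. x * q x l) 1" using q_cont by (intro isCont_mult continuous_ident)
  have "isCont (aa f k) ((\<lambda>x. x * q x l) 1)" using c by simp
  with c2 have "isCont (\<lambda>x. aa f k (x * q x l)) 1" by (rule isCont_o2)
  then show "((\<lambda>x. aa f k (x * q x l)) \<longlongrightarrow> aa f k (q 1 l)) (at 1)" by (simp add: isCont_def)
qed

lemma lim_\<rho>: "l \<in> {1..<m} \<Longrightarrow> ((\<lambda>x. \<rho> x l) \<longlongrightarrow> \<rho> 1 l) (at 1)"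
  unfolding \<rho>_def using cont_q(1) by auto
lemma lim_\<sigma>: "l \<in> {1..<m} \<Longrightarrow> ((\<lambda>x. \<sigma> x l) \<longlongrightarrow> \<rho> 1 l) (at 1)"
  unfolding \<rho>_def \<sigma>_def using cont_q(2) by auto

lemma lim_BB: "(BB \<longlongrightarrow> (\<Prod>l\<in>{1..<m}. \<rho> 1 l)) (at 1)"
  unfolding BB_def[abs_def] by (rule tendsto_prod) (rule lim_\<sigma>)
lemma lim_Lk: "k < m \<Longrightarrow> ((Lk k) \<longlongrightarrow> (\<Prod>l\<in>{1..<k}. \<rho> 1 l)) (at 1)"
  unfolding Lk_def[abs_def] by (rule tendsto_prod) (rule lim_\<rho>, auto)
lemma lim_Rk: "((Rk k) \<longlongrightarrow> (\<Prod>l\<in>{Suc k..<m}. \<rho> 1 l)) (at 1)"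
  unfolding Rk_def[abs_def] by (rule tendsto_prod) (rule lim_\<sigma>, auto)

lemma lim_br1: "(br1 \<longlongrightarrow> 0) (at 1)"
  unfolding br1_def[abs_def] by (rule bracket1_lim)

lemma lim_brk: assumes k: "1 \<le> k" "k < m" shows "(brk k \<longlongrightarrow> 0) (at 1)"
proof -
  define c where "c = q 1 k"
  define A' where "A' = (deriv (eul (b k) f) c * f c - eul (b k) f c * deriv f c) / (f c * f c)"
  have fa: "f analytic_on {c}" "f c \<noteq> 0" using gen[OF k] unfolding c_def by auto
  have aad: "(aa f (b k) has_field_derivative A') (at c)" unfolding A'_def by (rule aa_deriv[OF fa])
  define qd where "qd = deriv (\<lambda>x. q x k) 1"
  have qdd: "((\<lambda>x. q x k) has_field_derivative qd) (at 1)" unfolding qd_def by (rule q_deriv)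
  have md: "((\<lambda>x. x * q x k) has_field_derivative 1 * q 1 k + qd * 1) (at 1)"
    by (rule DERIV_mult[OF DERIV_ident qdd])
  have aad1: "(aa f (b k) has_field_derivative A') (at (1 * q 1 k))" using aad unfolding c_def by simp
  have aad2: "(aa f (b k) has_field_derivative A') (at (q 1 k))" using aad unfolding c_def by simp
  have d1: "((\<lambda>x. aa f (b k) (x * q x k)) has_field_derivative A' * (1 * q 1 k + qd * 1)) (at 1)"
    by (rule DERIV_chain2[OF aad1 md])
  have d2: "((\<lambda>x. aa f (b k) (q x k)) has_field_derivative A' * qd) (at 1)"
    by (rule DERIV_chain2[OF aad2 qdd])
  define D where "D x = \<sigma> x k - \<rho> x k" for x
  have Dd: "(D has_field_derivative c * A') (at 1)"
    unfolding D_def \<sigma>_def \<rho>_def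
    using DERIV_diff[OF d1 d2] by (rule DERIV_cong) (simp add: c_def algebra_simps)
  have D1: "D 1 = 0" unfolding D_def \<sigma>_def \<rho>_def by simp
  have l1: "((\<lambda>x. D x / f x) \<longlongrightarrow> c * A' / H 1) (at 1)"
    by (rule lhopital_complex_simple[OF Dd deriv_f1 D1 zero simple]) simp
  have ce: "((\<lambda>x. eul 1 f x) \<longlongrightarrow> H 1) (at 1)"
    using analytic_at_imp_isCont[OF eul_analytic[OF hol1]] by (simp add: isCont_def)
  have l2: "((\<lambda>x. eul 1 f x * (D x / f x)) \<longlongrightarrow> H 1 * (c * A' / H 1)) (at 1)"
    by (rule tendsto_mult[OF ce l1])
  have e2: "aa f 1 x * (\<sigma> x k - \<rho> x k) = eul 1 f x * (D x / f x)" for x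
    unfolding aa_def D_def by (simp add: times_divide_eq_left times_divide_eq_right)
  have kk: "k \<in> {1..<m}" using k by simp
  have lp: "((\<lambda>x. \<rho>p x k) \<longlongrightarrow> aa f (b k + 1) c) (at 1)" unfolding \<rho>p_def c_def by (rule cont_q(1)[OF k])
  have le: "((\<lambda>x. \<epsilon> x k) \<longlongrightarrow> aa f 1 c) (at 1)" unfolding \<epsilon>_def c_def by (rule cont_q(1)[OF k])
  have ls: "((\<lambda>x. \<sigma> x k) \<longlongrightarrow> aa f (b k) c) (at 1)" unfolding \<sigma>_def c_def by (rule cont_q(2)[OF k])
  have "((\<lambda>x. \<rho>p x k - \<epsilon> x k * \<sigma> x k - eul 1 f x * (D x / f x)) \<longlongrightarrow>
        aa f (b k + 1) c - aa f 1 c * aa f (b k) c - H 1 * (c * A' / H 1)) (at 1)"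
    by (intro tendsto_diff tendsto_mult lp le ls l2)
  moreover have "aa f (b k + 1) c - aa f 1 c * aa f (b k) c - H 1 * (c * A' / H 1) = 0"
    using aa_identity[OF fa, of "b k"] simple unfolding A'_def by simp
  ultimately show ?thesis unfolding brk_def[abs_def] e2 by simp
qed

lemma Fb_lim: "(Fb \<longlongrightarrow> 0) (at 1)"
proof -
  obtain r where r: "r > 0" "\<And>z. z \<in> ball 1 r \<Longrightarrow> eul 1 f (1/z) = eul 1 f z"
    "\<And>z. z \<in> ball 1 r \<Longrightarrow> f (1/z) = - f z" by (rule odd_facts) blast
  define G where "G x = (-1) ^ m * (BB x * br1 x + H (b 0) * (\<Sum>k\<in>{1..<m}. Lk k x * Rk k x * brk k x))" for x
  have ev: "eventually (\<lambda>x. G x = Fb x) (at 1)"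
    unfolding eventually_at
  proof (intro exI[of _ r] conjI ballI impI allI)
    show "r > 0" by (rule r(1))
    fix x :: complex assume "x \<noteq> 1 \<and> dist x 1 < r"
    then have "x \<in> ball 1 r" by (simp add: dist_commute)
    then show "G x = Fb x" unfolding G_def using Fb_eq eps_m[OF r(2) r(3)] by simp
  qed
  have "(G \<longlongrightarrow> (-1) ^ m * ((\<Prod>l\<in>{1..<m}. \<rho> 1 l) * 0 + H (b 0) *
       (\<Sum>k\<in>{1..<m}. (\<Prod>l\<in>{1..<k}. \<rho> 1 l) * (\<Prod>l\<in>{Suc k..<m}. \<rho> 1 l) * 0))) (at 1)"
    unfolding G_def
    by (intro tendsto_intros lim_BB lim_br1 tendsto_sum lim_Lk lim_Rk lim_brk) auto
  then have "(G \<longlongrightarrow> 0) (at 1)" by simp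
  then show ?thesis using tendsto_cong[OF ev] by blast
qed

end

context main
begin

lemma is_beta: "\<beta> \<in> comps {2..n} \<Longrightarrow> beta f n s \<beta>"
  by (simp add: beta_def beta_axioms_def main_axioms)

lemma Phi_decomp: "Phi f n (tt x) = (\<Sum>\<beta>\<in>comps {2..n}. beta.Fb f n s \<beta> x)"
proof -
  have e: "{1..n} = insert 1 {2..n}" using n2 by auto
  show ?thesis
    unfolding Phi_termL compositions_eq e
    by (subst comps_insert_sum) (auto intro!: sum.cong simp: beta.Fb_def[OF is_beta] beta.m_def[OF is_beta])
qed

lemma main_lim: "((\<lambda>x. Phi f n (tt x)) \<longlongrightarrow> 0) (at 1)"
proof -
  have "((\<lambda>x. \<Sum>\<beta>\<in>comps {2..n}. beta.Fb f n s \<beta> x) \<longlongrightarrow> 0) (at 1)"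
  proof (rule tendsto_null_sum)
    fix \<beta> assume "\<beta> \<in> comps {2..n}"
    then interpret beta f n s \<beta> by unfold_locales
    show "((\<lambda>x. Fb x) \<longlongrightarrow> 0) (at 1)" using Fb_lim by simp
  qed
  then show ?thesis unfolding Phi_decomp .
qed

end

theorem theorem11p3:
  fixes f :: "complex \<Rightarrow> complex" and n :: nat and s :: "nat \<Rightarrow> complex"
  assumes mero: "f meromorphic_on (- {0})"
    and hol1: "f analytic_on {1}"
    and odd: "\<And>x. x \<noteq> 0 \<Longrightarrow> f analytic_on {x} \<Longrightarrow> f (1 / x) = - f x"
    and zero: "f 1 = 0"
    and simple: "eul 1 f 1 \<noteq> 0"
    and n2: "n \<ge> 2"
    and s_nz: "\<And>j. 2 \<le> j \<Longrightarrow> j < n \<Longrightarrow> s j \<noteq> 0"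
    and generic: "\<And>T. T \<subseteq> {2..n} \<Longrightarrow> T \<noteq> {} \<Longrightarrow> T \<noteq> {2..n} \<Longrightarrow>
        f analytic_on {\<Prod>j\<in>T. (if j = n then 1 / (\<Prod>k\<in>{2..<n}. s k) else s j)} \<and>
        f (\<Prod>j\<in>T. (if j = n then 1 / (\<Prod>k\<in>{2..<n}. s k) else s j)) \<noteq> 0"
  shows "((\<lambda>x. Phi f n (\<lambda>j. if j = 1 then x
                           else if j = n then 1 / (x * (\<Prod>k\<in>{2..<n}. s k))
                           else s j)) \<longlongrightarrow> 0) (at 1)"
proof -
  interpret main f n s
    by unfold_locales (use hol1 odd zero simple n2 s_nz generic in auto)
  have "(\<lambda>j. if j = 1 then x else if j = n then 1 / (x * (\<Prod>k\<in>{2..<n}. s k)) else s j) = tt x" for x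
    unfolding tt_def SS_def by (rule ext) simp
  then show ?thesis using main_lim by simp
qed

end
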